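(* Let $A$ be an $n\times n$ matrix with non-negative real entries and $\|A\|_{\max}\le 1$. Then every eigenvalue $\lambda$ of $A$ satisfies $\mathrm{Re}(\lambda) \ge -n/2$.
   Context: $\|A\|_{\max}$ denotes the largest absolute value of an entry of $A$. *)

theory Defs
  imports "Jordan_Normal_Form.Jordan_Normal_Form"
begin

end

theory Submission
  imports Defs
begin

lemma quad_lb:
  fixes a :: "nat \<Rightarrow> nat \<Rightarrow> real" and x :: "nat \<Rightarrow> real"
  assumes a0: "\<And>i j. i < n \<Longrightarrow> j < n \<Longrightarrow> 0 \<le> a i j"
    and a1: "\<And>i j. i < n \<Longrightarrow> j < n \<Longrightarrow> a i j \<le> 1"
  shows "(\<Sum>i<n. \<Sum>j<n. a i j * (x i * x j)) \<ge> - (real n / 2) * (\<Sum>i<n. (x i)^2)"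
proof -
  have t: "a i j * (x i * x j) \<ge> (x i * x j - \<bar>x i\<bar> * \<bar>x j\<bar>) / 2" if "i < n" "j < n" for i j
  proof (cases "x i * x j \<ge> 0")
    case True
    then have "\<bar>x i\<bar> * \<bar>x j\<bar> = x i * x j" by (simp add: abs_mult[symmetric])
    then show ?thesis using True a0[OF that] by simp
  next
    case False
    then have "\<bar>x i\<bar> * \<bar>x j\<bar> = - (x i * x j)" by (simp add: abs_mult[symmetric])
    moreover have "a i j * (x i * x j) \<ge> 1 * (x i * x j)"
      using False a1[OF that] by (intro mult_right_mono_neg) auto
    ultimately show ?thesis by simp
  qed
  have s1: "(\<Sum>i<n. \<Sum>j<n. a i j * (x i * x j)) \<ge> (\<Sum>i<n. \<Sum>j<n. (x i * x j - \<bar>x i\<bar> * \<bar>x j\<bar>) / 2)"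
    by (intro sum_mono) (use t in auto)
  have s2: "(\<Sum>i<n. \<Sum>j<n. (x i * x j - \<bar>x i\<bar> * \<bar>x j\<bar>) / 2)
      = ((\<Sum>i<n. x i)^2 - (\<Sum>i<n. \<bar>x i\<bar>)^2) / 2"
    by (simp add: power2_eq_square sum_product sum_subtractf sum_divide_distrib diff_divide_distrib)
  have cs0: "0 \<le> (\<Sum>i<n. \<Sum>j<n. (\<bar>x i\<bar> - \<bar>x j\<bar>)^2)"
    by (intro sum_nonneg) auto
  have cs1: "(\<Sum>i<n. \<Sum>j<n. (\<bar>x i\<bar> - \<bar>x j\<bar>)^2) = 2 * real n * (\<Sum>i<n. (x i)^2) - 2 * (\<Sum>i<n. \<bar>x i\<bar>)^2"
    by (simp add: power2_diff sum_subtractf sum.distrib sum_distrib_left sum_product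
        power2_eq_square[of "\<Sum>i<n. \<bar>x i\<bar>"] algebra_simps sum_distrib_right[symmetric])
  have "(\<Sum>i<n. \<bar>x i\<bar>)^2 \<le> real n * (\<Sum>i<n. (x i)^2)" using cs0 cs1 by linarith
  moreover have "0 \<le> (\<Sum>i<n. x i)^2" by simp
  moreover have "- (real n / 2) * (\<Sum>i<n. (x i)^2) = - (real n * (\<Sum>i<n. (x i)^2)) / 2" by simp
  ultimately show ?thesis using s1 s2 by (smt (verit) divide_right_mono)
qed

theorem lemma6:
  fixes A :: "real mat" and n :: nat and lam :: complex
  assumes "A \<in> carrier_mat n n"
    and "\<And>i j. i < n \<Longrightarrow> j < n \<Longrightarrow> 0 \<le> A $$ (i, j)"
    and "\<And>i j. i < n \<Longrightarrow> j < n \<Longrightarrow> \<bar>A $$ (i, j)\<bar> \<le> 1"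
    and "eigenvalue (map_mat complex_of_real A) lam"
  shows "Re lam \<ge> - (real n / 2)"
proof -
  let ?M = "map_mat complex_of_real A"
  obtain v where ev: "eigenvector ?M v lam" using assms(4) unfolding eigenvalue_def by blast
  have vc: "v \<in> carrier_vec n" and vnz: "v \<noteq> 0\<^sub>v n" and eq: "?M *\<^sub>v v = lam \<cdot>\<^sub>v v"
    using ev assms(1) unfolding eigenvector_def by auto
  have row: "(\<Sum>j<n. complex_of_real (A $$ (i, j)) * v $ j) = lam * v $ i" if "i < n" for i
  proof -
    have "(?M *\<^sub>v v) $ i = (lam \<cdot>\<^sub>v v) $ i" using eq by simp
    then show ?thesis using that assms(1) vc
      by (simp add: mult_mat_vec_def scalar_prod_def atLeast0LessThan)
  qed
  define x where "x i = Re (v $ i)" for i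
  define y where "y i = Im (v $ i)" for i
  have key: "(\<Sum>i<n. \<Sum>j<n. cnj (v $ i) * (complex_of_real (A $$ (i, j)) * v $ j))
      = (\<Sum>i<n. cnj (v $ i) * (lam * v $ i))"
    by (intro sum.cong refl) (simp add: row sum_distrib_left[symmetric])
  have L: "Re (\<Sum>i<n. \<Sum>j<n. cnj (v $ i) * (complex_of_real (A $$ (i, j)) * v $ j))
     = (\<Sum>i<n. \<Sum>j<n. A $$ (i, j) * (x i * x j)) + (\<Sum>i<n. \<Sum>j<n. A $$ (i, j) * (y i * y j))"
    by (simp add: Re_sum x_def y_def sum.distrib[symmetric] algebra_simps)
  define N where "N = (\<Sum>i<n. (x i)^2) + (\<Sum>i<n. (y i)^2)"
  have R: "Re (\<Sum>i<n. cnj (v $ i) * (lam * v $ i)) = Re lam * N"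
    by (simp add: Re_sum N_def x_def y_def sum.distrib[symmetric] sum_distrib_left algebra_simps power2_eq_square)
  have Npos: "N > 0"
  proof -
    obtain i where i: "i < n" "v $ i \<noteq> 0" using vnz vc
      by (metis carrier_vecD eq_vecI index_zero_vec(1) index_zero_vec(2))
    have "x i ^ 2 + y i ^ 2 > 0" using i(2) unfolding x_def y_def
      by (simp add: sum_power2_gt_zero_iff complex_eq_iff)
    moreover have "x i ^ 2 \<le> (\<Sum>i<n. (x i)^2)" using i(1)
      by (intro member_le_sum) auto
    moreover have "y i ^ 2 \<le> (\<Sum>i<n. (y i)^2)" using i(1)
      by (intro member_le_sum) auto
    ultimately show ?thesis unfolding N_def by linarith
  qed
  have a0: "\<And>i j. i < n \<Longrightarrow> j < n \<Longrightarrow> 0 \<le> A $$ (i, j)" by (rule assms(2))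
  have a1: "\<And>i j. i < n \<Longrightarrow> j < n \<Longrightarrow> A $$ (i, j) \<le> 1" using assms(3) by force
  have bx: "(\<Sum>i<n. \<Sum>j<n. A $$ (i, j) * (x i * x j)) \<ge> - (real n / 2) * (\<Sum>i<n. (x i)^2)"
    by (rule quad_lb[where a = "\<lambda>i j. A $$ (i, j)"]) (use a0 a1 in auto)
  have by': "(\<Sum>i<n. \<Sum>j<n. A $$ (i, j) * (y i * y j)) \<ge> - (real n / 2) * (\<Sum>i<n. (y i)^2)"
    by (rule quad_lb[where a = "\<lambda>i j. A $$ (i, j)"]) (use a0 a1 in auto)
  have "Re lam * N \<ge> - (real n / 2) * N"
    using key L R bx by' unfolding N_def by (simp add: algebra_simps)
  then show ?thesis using Npos by (meson mult_le_cancel_right_pos)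
qed

end
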